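(* One has $C^\perp=C^{\perp_{\mathbb{F}}}$ for every $A$-code $C$ if and only if either $m=1$ or $f(x)=x^2+ax-1$ for some $a\in\mathbb{F}$.
   Context: Let $\mathbb{F}$ be a finite field, $f(x)\in\mathbb{F}[x]$ monic of degree $m$, $A=\mathbb{F}[x]/\langle f(x)\rangle$, elements identified with polynomials of degree $<m$. An $A$-code of length $l$ is an $A$-submodule of $A^l$, and $C^\perp=\{a\in A^l:\sum_ia_ic_i=0\ \forall c\in C\}$ is its $A$-dual. Identify $g(x)=\sum_{i=0}^{m-1}a_ix^i\in A$ with $(a_0,\ldots,a_{m-1})\in\mathbb{F}^m$ and $A^l$ with $\mathbb{F}^{lm}$ by concatenation; the $\mathbb{F}$-dual $C^{\perp_{\mathbb{F}}}$ of $C$ is its dual with respect to the standard dot product on $\mathbb{F}^{lm}$, viewed as a subset of $A^l$. *)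

theory Defs
  imports "HOL-Computational_Algebra.Polynomial"
begin

text \<open>The ring A = F[x]/(f), with elements identified with polynomials of degree < m = degree f.\<close>
definition Aset :: "'a::field poly \<Rightarrow> 'a poly set" where
  "Aset f = {p. \<forall>i\<ge>degree f. coeff p i = 0}"

definition Avecs :: "'a::field poly \<Rightarrow> nat \<Rightarrow> (nat \<Rightarrow> 'a poly) set" where
  "Avecs f l = {v. (\<forall>i<l. v i \<in> Aset f) \<and> (\<forall>i\<ge>l. v i = 0)}"

definition is_A_code :: "'a::field poly \<Rightarrow> nat \<Rightarrow> (nat \<Rightarrow> 'a poly) set \<Rightarrow> bool" where
  "is_A_code f l C \<longleftrightarrow>
     C \<subseteq> Avecs f l \<and> (\<lambda>i. 0) \<in> C \<and>
     (\<forall>u\<in>C. \<forall>v\<in>C. (\<lambda>i. u i + v i) \<in> C) \<and>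
     (\<forall>a\<in>Aset f. \<forall>v\<in>C. (\<lambda>i. (a * v i) mod f) \<in> C)"

definition A_dual :: "'a::field poly \<Rightarrow> nat \<Rightarrow> (nat \<Rightarrow> 'a poly) set \<Rightarrow> (nat \<Rightarrow> 'a poly) set" where
  "A_dual f l C = {a \<in> Avecs f l. \<forall>c\<in>C. (\<Sum>i<l. a i * c i) mod f = 0}"

text \<open>F-dual: dual w.r.t. the standard dot product on F^(l m) (coefficient vectors concatenated).\<close>
definition F_dual :: "'a::field poly \<Rightarrow> nat \<Rightarrow> (nat \<Rightarrow> 'a poly) set \<Rightarrow> (nat \<Rightarrow> 'a poly) set" where
  "F_dual f l C = {a \<in> Avecs f l. \<forall>c\<in>C.
      (\<Sum>i<l. \<Sum>j<degree f. coeff (a i) j * coeff (c i) j) = 0}"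

end

theory Submission
  imports Defs
begin

lemma Aset_deg:
  fixes f p :: "'a::field poly"
  assumes "degree f \<ge> 1" "p \<in> Aset f" shows "degree p < degree f"
proof -
  have "degree p \<le> degree f - 1"
    using assms by (intro degree_le) (auto simp: Aset_def)
  thus ?thesis using assms(1) by linarith
qed

lemma deg_Aset:
  fixes f p :: "'a::field poly"
  assumes "degree p < degree f" shows "p \<in> Aset f"
  using assms by (auto simp: Aset_def coeff_eq_0)

lemma mod_Aset:
  fixes f p :: "'a::field poly"
  assumes "degree f \<ge> 1" shows "p mod f \<in> Aset f"
proof -
  have "f \<noteq> 0" using assms by auto
  then have "p mod f = 0 \<or> degree (p mod f) < degree f" by (rule degree_mod_less)
  thus ?thesis using deg_Aset[of "p mod f" f] by (auto simp: Aset_def)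
qed

lemma Aset_add:
  fixes f p q :: "'a::field poly"
  shows "p \<in> Aset f \<Longrightarrow> q \<in> Aset f \<Longrightarrow> p + q \<in> Aset f"
  by (auto simp: Aset_def)

lemma mod_sum_poly:
  fixes f :: "'a::field poly"
  shows "(\<Sum>i\<in>A. g i) mod f = (\<Sum>i\<in>A. g i mod f)"
  by (induction A rule: infinite_finite_induct) (auto simp: poly_mod_add_left)

lemma two_coeffs:
  fixes p :: "'a::field poly"
  assumes "degree p < 2" shows "p = [:coeff p 0, coeff p 1:]"
  using assms by (auto simp: poly_eq_iff coeff_pCons less_2_cases_iff coeff_eq_0 split: nat.split)

lemma key:
  fixes p q :: "'a::field poly"
  assumes f: "f = [:-1,b,1:]" and "degree p < 2" "degree q < 2"
  shows "coeff ((p*q) mod f) 0 = coeff p 0 * coeff q 0 + coeff p 1 * coeff q 1"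
proof -
  obtain p0 p1 where p: "p = [:p0,p1:]" using two_coeffs[OF assms(2)] by blast
  obtain q0 q1 where q: "q = [:q0,q1:]" using two_coeffs[OF assms(3)] by blast
  define r where "r = [:p0*q0 + p1*q1, p0*q1+p1*q0 - b*p1*q1:]"
  have e: "p*q = r + [:p1*q1:] * f"
    unfolding p q r_def f by (simp add: algebra_simps)
  have "degree r < degree f" unfolding r_def f by simp
  then have "(r + [:p1*q1:] * f) mod f = r" by (simp only: mod_mult_self1 mod_poly_less)
  then have "(p*q) mod f = r" unfolding e .
  thus ?thesis unfolding r_def p q by simp
qed

lemma dot1:
  fixes f :: "'a::field poly"
  assumes d: "degree f = 1" and a: "a \<in> Avecs f l" and c: "c \<in> Avecs f l"
  shows "((\<Sum>i<l. a i * c i) mod f = 0) \<longleftrightarrow>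
         (\<Sum>i<l. \<Sum>j<degree f. coeff (a i) j * coeff (c i) j) = 0"
proof -
  define s where "s = (\<Sum>i<l. a i * c i)"
  have pc: "a i * c i = [:coeff (a i) 0 * coeff (c i) 0:]" if "i < l" for i
  proof -
    have "degree (a i) < 1" "degree (c i) < 1"
      using a c that d Aset_deg[of f] by (auto simp: Avecs_def)
    then have "a i = [:coeff (a i) 0:]" "c i = [:coeff (c i) 0:]"
      using degree_0_id by (metis less_one)+
    then show ?thesis by (metis mult_pCons_left mult_zero_left pCons_0_0 smult_pCons smult_0_right add.right_neutral coeff_pCons_0)
  qed
  have "coeff s j = 0" if "j > 0" for j
    unfolding s_def coeff_sum using pc that by (cases j) (auto simp: coeff_pCons)
  then have "degree s = 0" by (intro degree_le[of 0, simplified]) auto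
  then have sm: "s mod f = s" using d by (simp add: mod_poly_less)
  have s0: "coeff s 0 = (\<Sum>i<l. coeff (a i) 0 * coeff (c i) 0)"
    unfolding s_def coeff_sum by (simp add: coeff_mult_0)
  have "s = 0 \<longleftrightarrow> coeff s 0 = 0" using \<open>degree s = 0\<close>
    by (metis degree_0_id pCons_0_0 coeff_0)
  then show ?thesis using sm s0 d unfolding s_def[symmetric] by simp
qed

lemma dot2:
  fixes f :: "'a::field poly"
  assumes f: "f = [:-1,b,1:]" and a: "a \<in> Avecs f l" and c: "c \<in> Avecs f l"
  shows "coeff ((\<Sum>i<l. a i * c i) mod f) 0 =
         (\<Sum>i<l. \<Sum>j<degree f. coeff (a i) j * coeff (c i) j)"
proof -
  have d: "degree f = 2" using f by simp
  have "coeff ((a i * c i) mod f) 0 = (\<Sum>j<degree f. coeff (a i) j * coeff (c i) j)"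
    if "i < l" for i
  proof -
    have "degree (a i) < 2" "degree (c i) < 2"
      using a c that d Aset_deg[of f] by (auto simp: Avecs_def)
    from key[OF f this] show ?thesis by (simp add: d numeral_2_eq_2)
  qed
  then show ?thesis by (simp add: mod_sum_poly coeff_sum)
qed

lemma dual2:
  fixes f :: "'a::field poly"
  assumes f: "f = [:-1,b,1:]" and C: "is_A_code f l C"
  shows "A_dual f l C = F_dual f l C"
proof -
  have d: "degree f = 2" using f by simp
  have Csub: "C \<subseteq> Avecs f l" using C by (simp add: is_A_code_def)
  define X :: "'a poly" where "X = [:0,1:]"
  have XA: "X \<in> Aset f" using d by (intro deg_Aset) (simp add: X_def)
  show ?thesis
  proof (intro set_eqI iffI)
    fix a assume "a \<in> A_dual f l C"
    then show "a \<in> F_dual f l C" using dot2[OF f, of a l] Csub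
      by (force simp: A_dual_def F_dual_def)
  next
    fix a assume aF: "a \<in> F_dual f l C"
    have aA: "a \<in> Avecs f l" using aF by (simp add: F_dual_def)
    have "(\<Sum>i<l. a i * c i) mod f = 0" if cC: "c \<in> C" for c
    proof -
      define s where "s = (\<Sum>i<l. a i * c i) mod f"
      define c' where "c' = (\<lambda>i. (X * c i) mod f)"
      have c'C: "c' \<in> C" using C XA cC unfolding c'_def is_A_code_def by blast
      have cA: "c \<in> Avecs f l" "c' \<in> Avecs f l" using cC c'C Csub by auto
      have s0: "coeff s 0 = 0" using dot2[OF f aA cA(1)] aF cC
        unfolding s_def by (auto simp: F_dual_def)
      have "(\<Sum>i<l. a i * c' i) mod f = (\<Sum>i<l. (a i * c' i) mod f) mod f"
        by (simp add: mod_sum_eq)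
      also have "\<dots> = (\<Sum>i<l. (X * (a i * c i)) mod f) mod f"
        unfolding c'_def by (simp add: mod_mult_right_eq ac_simps)
      also have "\<dots> = (X * (\<Sum>i<l. a i * c i)) mod f"
        by (simp add: mod_sum_eq sum_distrib_left)
      also have "\<dots> = (X * s) mod f" unfolding s_def by (simp add: mod_mult_right_eq)
      finally have e: "(\<Sum>i<l. a i * c' i) mod f = (X * s) mod f" .
      have sdeg: "degree s < 2" using mod_Aset[of f] d Aset_deg[of f s]
        unfolding s_def by simp
      have "coeff ((X * s) mod f) 0 = coeff s 1"
        using key[OF f _ sdeg, of X] by (simp add: X_def)
      then have s1: "coeff s 1 = 0" using dot2[OF f aA cA(2)] aF c'C e
        by (auto simp: F_dual_def)
      have "s = [:coeff s 0, coeff s 1:]" using two_coeffs[OF sdeg] .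
      then show ?thesis using s0 s1 unfolding s_def by simp
    qed
    then show "a \<in> A_dual f l C" using aA by (simp add: A_dual_def)
  qed
qed

lemma sum_single:
  fixes g :: "nat \<Rightarrow> 'a::comm_monoid_add"
  assumes "k < m" "\<And>j. j \<noteq> k \<Longrightarrow> g j = 0"
  shows "(\<Sum>j<m. g j) = g k"
  using assms by (subst sum.remove[of _ k]) auto

lemma conv:
  fixes f :: "'a::field poly"
  assumes lc: "lead_coeff f = 1" and d2: "degree f \<ge> 2"
    and H: "\<forall>l C. is_A_code f l C \<longrightarrow> A_dual f l C = F_dual f l C"
  shows "\<exists>b. f = [:-1, b, 1:]"
proof -
  have d1: "degree f \<ge> 1" using d2 by simp
  define X :: "'a poly" where "X = [:0,1:]"
  define vec where "vec = (\<lambda>t::'a poly. \<lambda>i::nat. if i = 0 then t else if i = 1 then (X*t) mod f else 0)"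
  define C where "C = vec ` Aset f"
  have XA: "X \<in> Aset f" using d2 by (intro deg_Aset) (simp add: X_def)
  have code: "is_A_code f 2 C"
    unfolding is_A_code_def
  proof (intro conjI ballI subsetI)
    fix v assume "v \<in> C"
    then obtain t where t: "t \<in> Aset f" "v = vec t" by (auto simp: C_def)
    then show "v \<in> Avecs f 2" using mod_Aset[OF d1]
      by (auto simp: Avecs_def vec_def)
  next
    show "(\<lambda>i. 0) \<in> C" unfolding C_def
      by (rule image_eqI[of _ _ 0]) (auto simp: vec_def Aset_def)
  next
    fix u v assume "u \<in> C" "v \<in> C"
    then obtain t s where "t \<in> Aset f" "u = vec t" "s \<in> Aset f" "v = vec s" by (auto simp: C_def)
    then show "(\<lambda>i. u i + v i) \<in> C" unfolding C_def
      by (intro image_eqI[of _ _ "t+s"]) (auto simp: vec_def Aset_add poly_mod_add_left distrib_left)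
  next
    fix a v assume "a \<in> Aset f" "v \<in> C"
    then obtain t where "t \<in> Aset f" "v = vec t" by (auto simp: C_def)
    moreover have "(a * ((X*t) mod f)) mod f = (X * ((a*t) mod f)) mod f"
      by (metis mod_mult_right_eq mult.left_commute)
    ultimately show "(\<lambda>i. (a * v i) mod f) \<in> C" unfolding C_def
      using mod_Aset[OF d1]
      by (intro image_eqI[of _ _ "(a*t) mod f"]) (auto simp: vec_def)
  qed
  define w where "w = (\<lambda>i::nat. if i = 0 then -X else if i = 1 then 1 else (0::'a poly))"
  have wA: "w \<in> Avecs f 2" using XA d2 by (auto simp: Avecs_def w_def Aset_def)
  have "w \<in> A_dual f 2 C"
  proof -
    have "(\<Sum>i<2. w i * c i) mod f = 0" if "c \<in> C" for c
    proof -
      obtain t where "c = vec t" using \<open>c \<in> C\<close> by (auto simp: C_def)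
      then have "(\<Sum>i<2. w i * c i) = - (X*t) + (X*t) mod f"
        by (simp add: w_def vec_def numeral_2_eq_2)
      then show ?thesis by (simp add: poly_mod_diff_left)
    qed
    then show ?thesis using wA by (simp add: A_dual_def)
  qed
  then have wF: "w \<in> F_dual f 2 C" using H code by blast
  have vX: "vec X \<in> C" using XA by (simp add: C_def)
  define r where "r = (X*X) mod f"
  have "(\<Sum>j<degree f. coeff (w 0) j * coeff (vec X 0) j) = -1"
    using d2 by (subst sum_single[of 1]) (auto simp: w_def vec_def X_def coeff_pCons split: nat.split)
  moreover have "(\<Sum>j<degree f. coeff (w 1) j * coeff (vec X 1) j) = coeff r 0"
    using d2 by (subst sum_single[of 0]) (auto simp: w_def vec_def r_def)
  ultimately have "-1 + coeff r 0 = 0" using wF vX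
    by (auto simp: F_dual_def numeral_2_eq_2)
  then have r0: "coeff r 0 = 1" by (simp add: algebra_simps)
  show ?thesis
  proof (cases "degree f = 2")
    case False
    then have "degree (X*X) < degree f" using d2 by (simp add: X_def)
    then have "r = X*X" unfolding r_def by (rule mod_poly_less)
    then show ?thesis using r0 by (simp add: X_def)
  next
    case True
    obtain f0 f1 where fe: "f = [:f0, f1, 1:]"
    proof
      show "f = [:coeff f 0, coeff f 1, 1:]" using lc True
        by (auto simp: poly_eq_iff coeff_pCons coeff_eq_0 less_2_cases_iff numeral_2_eq_2 split: nat.split)
    qed
    have "X*X = [:-f0, -f1:] + 1 * f" by (simp add: fe X_def)
    then have "r = [:-f0, -f1:] mod f" unfolding r_def by (metis mod_mult_self1)
    also have "\<dots> = [:-f0, -f1:]" by (rule mod_poly_less) (simp add: fe)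
    finally have "f0 = -1" using r0 by (simp add: minus_equation_iff)
    then show ?thesis using fe by blast
  qed
qed

theorem mainTheorem15:
  fixes f :: "'a::{finite,field} poly"
  assumes "lead_coeff f = 1" and "degree f \<ge> 1"
  shows "(\<forall>l C. is_A_code f l C \<longrightarrow> A_dual f l C = F_dual f l C)
     \<longleftrightarrow> (degree f = 1 \<or> (\<exists>a. f = [:-1, a, 1:]))"
proof
  assume H: "\<forall>l C. is_A_code f l C \<longrightarrow> A_dual f l C = F_dual f l C"
  show "degree f = 1 \<or> (\<exists>a. f = [:-1, a, 1:])"
  proof (cases "degree f = 1")
    case False
    then have "degree f \<ge> 2" using assms(2) by linarith
    then show ?thesis using conv[OF assms(1) _ H] by blast
  qed simp
next
  assume "degree f = 1 \<or> (\<exists>a. f = [:-1, a, 1:])"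
  then show "\<forall>l C. is_A_code f l C \<longrightarrow> A_dual f l C = F_dual f l C"
  proof
    assume d: "degree f = 1"
    show ?thesis
    proof (intro allI impI)
      fix l C assume "is_A_code f l C"
      then have "C \<subseteq> Avecs f l" by (simp add: is_A_code_def)
      then have "\<And>a c. a \<in> Avecs f l \<Longrightarrow> c \<in> C \<Longrightarrow> ((\<Sum>i<l. a i * c i) mod f = 0) \<longleftrightarrow>
         (\<Sum>i<l. \<Sum>j<degree f. coeff (a i) j * coeff (c i) j) = 0"
        using dot1[OF d] \<open>C \<subseteq> Avecs f l\<close> by (meson subsetD)
      then show "A_dual f l C = F_dual f l C"
        unfolding A_dual_def F_dual_def by blast
    qed
  next
    assume "\<exists>a. f = [:-1, a, 1:]"
    then obtain b where fb: "f = [:-1, b, 1:]" by blast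
    show ?thesis using dual2[OF fb] by simp
  qed
qed

end
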